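(* Let $Y$ be a non-negative random variable. Let $p:[t_{1}, \infty) \to [0, \infty)$ be a non-decreasing function such that $0 < p(2t) \leq b\, p(t)$ for all $t \geq t_{1}$ and $\lim_{t \to \infty} p(t) \mathbb{P}(Y > t) = 0$, where $b > 1$ and $t_{1} > 0$ are constants. Let $h:[t_{2}, \infty) \to [0, \infty)$ be a non-decreasing function with $\lim_{t \to \infty} h(t) = \infty$ and $\lim_{t \to \infty} h(t+1)/h(t) = 1$, where $t_{2} > 0$ is a constant. Then \[ \limsup_{n \to \infty} \frac{\log (p(n) \mathbb{P}(Y > n))}{h(n)} = \limsup_{t \to \infty} \frac{\log (p(t) \mathbb{P}(Y > t))}{h(t)} \quad\text{and}\quad \liminf_{n \to \infty} \frac{\log (p(n) \mathbb{P}(Y > n))}{h(n)} = \liminf_{t \to \infty} \frac{\log (p(t) \mathbb{P}(Y > t))}{h(t)}, \] where $n$ ranges over integers and $t$ over reals.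
   Context: $\log$ is the natural logarithm with $\log 0=-\infty$. *)

theory Defs
  imports "HOL-Probability.Probability"
begin

definition elog :: "real \<Rightarrow> ereal" where
  "elog x = (if x = 0 then -\<infinity> else ereal (ln x))"

end

theory Submission
  imports Defs
begin

lemma elog_div_eq:
  assumes "h > 0"
  shows "elog F / ereal h = (if F = 0 then -\<infinity> else ereal (ln F / h))"
  using assms by (auto simp: elog_def)

lemma transfer_seq:
  assumes "eventually P (at_top :: real filter)"
  shows "eventually (\<lambda>n::nat. P (real n)) sequentially"
  using assms filterlim_real_sequentially unfolding filterlim_iff by blast

lemma floor_facts:
  fixes t :: real assumes "t \<ge> 0"
  shows "real (nat \<lfloor>t\<rfloor>) \<le> t" "t \<le> real (nat \<lfloor>t\<rfloor>) + 1"
  using assms by linarith+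

lemma pos_from_bound:
  fixes x b y :: real assumes "0 < x" "x \<le> b * y" "b > 1" shows "y > 0"
proof (rule ccontr)
  assume "\<not> y > 0"
  then have "b * y \<le> 0" using assms by (intro mult_nonneg_nonpos) auto
  then show False using assms by linarith
qed

lemma main:
  fixes F h :: "real \<Rightarrow> real" and b T :: real
  assumes b: "b > 1" and T: "T \<ge> 0"
    and Fnn: "\<forall>t\<ge>T. F t \<ge> 0"
    and B1: "\<And>n t. T \<le> n \<Longrightarrow> n \<le> t \<Longrightarrow> t \<le> n + 1 \<Longrightarrow> F t \<le> b * F n"
    and B2: "\<And>n t. T \<le> n \<Longrightarrow> n \<le> t \<Longrightarrow> t \<le> n + 1 \<Longrightarrow> F (n + 1) \<le> b * F t"
    and Flim: "(F \<longlongrightarrow> 0) at_top"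
    and hmono: "mono_on {T..} h"
    and hlim: "filterlim h at_top at_top"
    and hrat: "((\<lambda>t. h (t + 1) / h t) \<longlongrightarrow> 1) at_top"
  shows "limsup (\<lambda>n::nat. elog (F (real n)) / ereal (h (real n)))
         = Limsup at_top (\<lambda>t::real. elog (F t) / ereal (h t))
     \<and> liminf (\<lambda>n::nat. elog (F (real n)) / ereal (h (real n)))
         = Liminf at_top (\<lambda>t::real. elog (F t) / ereal (h t))"
proof -
  define G where "G t = elog (F t) / ereal (h t)" for t
  define a where "a n = G (real n)" for n :: nat
  have hpos: "eventually (\<lambda>t. h t > 0) at_top"
    using hlim unfolding filterlim_at_top_dense by auto
  have F1: "eventually (\<lambda>t. F t < 1) at_top"
    using order_tendstoD(2)[OF Flim] by simp
  have G0: "eventually (\<lambda>t. G t \<le> 0) at_top"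
  proof -
    have "eventually (\<lambda>t. h t > 0 \<and> F t < 1 \<and> t \<ge> T) at_top"
      using hpos F1 eventually_ge_at_top[of T] by eventually_elim auto
    then show ?thesis
    proof eventually_elim
      case (elim t)
      then have "F t \<ge> 0" using Fnn by auto
      show ?case
      proof (cases "F t = 0")
        case True then show ?thesis using elim by (simp add: G_def elog_div_eq)
      next
        case False
        then have "ln (F t) \<le> 0" using elim \<open>F t \<ge> 0\<close> by simp
        then have "ln (F t) / h t \<le> 0" using elim by (simp add: divide_nonpos_pos)
        then show ?thesis using elim False by (simp add: G_def elog_div_eq)
      qed
    qed
  qed
  have hseq: "filterlim (\<lambda>n::nat. h (real n)) at_top sequentially"
    by (rule filterlim_compose[OF hlim filterlim_real_sequentially])
  have hratseq: "(\<lambda>n::nat. h (real n + 1) / h (real n)) \<longlonglongrightarrow> 1"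
    by (rule filterlim_compose[OF hrat filterlim_real_sequentially])
  have inv0: "(\<lambda>n::nat. c / h (real n)) \<longlonglongrightarrow> 0" for c
    by (rule tendsto_divide_0[OF tendsto_const filterlim_at_top_imp_at_infinity[OF hseq]])
  have hposseq: "eventually (\<lambda>n::nat. h (real n) > 0) sequentially"
    by (rule transfer_seq[OF hpos])
  have lnb: "ln b > 0" using b by simp
  have backT: "eventually Q at_top"
    if N: "\<And>n. n \<ge> N \<Longrightarrow> h (real n) > 0"
      and H: "\<And>t n. t \<ge> T \<Longrightarrow> n \<ge> N \<Longrightarrow> real n \<ge> T \<Longrightarrow> real n \<le> t \<Longrightarrow> t \<le> real n + 1
              \<Longrightarrow> h t > 0 \<Longrightarrow> h (real n) \<le> h t \<Longrightarrow> h t \<le> h (real n + 1) \<Longrightarrow> Q t"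
    for N :: nat and Q
  proof -
    have "eventually (\<lambda>t. t \<ge> real N + T + 1) at_top" by (rule eventually_ge_at_top)
    then show ?thesis
    proof eventually_elim
      case (elim t)
      define n where "n = nat \<lfloor>t\<rfloor>"
      have n1: "real n \<le> t" "t \<le> real n + 1" unfolding n_def
        using floor_facts[of t] elim T by auto
      have "real n \<ge> real N + T" using elim n1 by linarith
      then have nN: "n \<ge> N" and nT: "real n \<ge> T" using T by auto
      have m1: "h (real n) \<le> h t" using hmono nT n1 by (auto intro: mono_onD)
      have m2: "h t \<le> h (real n + 1)" using hmono nT n1 by (auto intro: mono_onD)
      have "h t > 0" using N[OF nN] m1 by simp
      then show ?case using H[OF _ nN nT n1 _ m1 m2] elim T by auto
    qed
  qed
  have LS1: "limsup a \<le> Limsup at_top G"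
    unfolding Limsup_le_iff
  proof (intro allI impI)
    fix y assume "y > Limsup at_top G"
    then have "eventually (\<lambda>t. G t < y) at_top" by (rule Limsup_lessD)
    then show "eventually (\<lambda>n. a n < y) sequentially" unfolding a_def by (rule transfer_seq)
  qed
  have LI1: "Liminf at_top G \<le> liminf a"
    unfolding le_Liminf_iff
  proof (intro allI impI)
    fix y assume "y < Liminf at_top G"
    then have "eventually (\<lambda>t. G t > y) at_top" by (rule less_LiminfD)
    then show "eventually (\<lambda>n. y < a n) sequentially" unfolding a_def by (rule transfer_seq)
  qed
  have LS2: "Limsup at_top G \<le> limsup a"
    unfolding Limsup_le_iff
  proof (intro allI impI)
    fix y assume yL: "y > limsup a"
    show "eventually (\<lambda>t. G t < y) at_top"
    proof (cases "y > 0")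
      case True
      show ?thesis using G0 by eventually_elim (use True in auto)
    next
      case False
      obtain z where z: "limsup a < z" "z < y" using dense yL by blast
      obtain r where r: "y = ereal r" using yL False by (cases y) auto
      obtain r' where r': "z = ereal r'" using z by (cases z) auto
      have rr: "r' < r" "r \<le> 0" using z r r' False by auto
      have ev1: "eventually (\<lambda>n. a n < ereal r') sequentially"
        using Limsup_lessD[OF z(1)] r' by simp
      have "(\<lambda>n::nat. r * (h (real n + 1) / h (real n)) - ln b / h (real n) - r') \<longlonglongrightarrow> r * 1 - 0 - r'"
        by (intro tendsto_intros hratseq inv0)
      then have ev2: "eventually (\<lambda>n::nat. r * (h (real n + 1) / h (real n)) - ln b / h (real n) - r' > 0) sequentially"
        using rr by (intro order_tendstoD(1)) auto
      have "eventually (\<lambda>n::nat. h (real n) > 0 \<and> (F (real n) = 0 \<or> ln (F (real n)) < r' * h (real n))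
             \<and> ln b + r' * h (real n) < r * h (real n + 1)) sequentially"
        using hposseq ev1 ev2
      proof eventually_elim
        case (elim n)
        have A: "F (real n) = 0 \<or> ln (F (real n)) / h (real n) < r'"
          using elim(2) elim(1) unfolding a_def G_def by (auto simp: elog_div_eq split: if_splits)
        have "0 < (r * (h (real n + 1) / h (real n)) - ln b / h (real n) - r') * h (real n)"
          using elim by simp
        also have "\<dots> = r * h (real n + 1) - ln b - r' * h (real n)"
          using elim(1) by (simp add: field_simps)
        finally show ?case using A elim(1) by (auto simp: pos_divide_less_eq)
      qed
      then obtain N where N: "\<And>n. n \<ge> N \<Longrightarrow> h (real n) > 0 \<and> (F (real n) = 0 \<or> ln (F (real n)) < r' * h (real n))
             \<and> ln b + r' * h (real n) < r * h (real n + 1)"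
        unfolding eventually_sequentially by blast
      show ?thesis
      proof (rule backT[of N])
        fix n assume "n \<ge> N" then show "h (real n) > 0" using N by blast
      next
        fix t n assume tT: "t \<ge> T" and nN: "n \<ge> N" and nT: "real n \<ge> T" and n1: "real n \<le> t" "t \<le> real n + 1"
          and ht: "h t > 0" and m1: "h (real n) \<le> h t" and m2: "h t \<le> h (real n + 1)"
        have Ft: "F t \<ge> 0" using Fnn tT by auto
        have "F t = 0 \<or> ln (F t) / h t < r"
        proof (cases "F t = 0")
          case False
          then have Ftp: "F t > 0" using Ft by simp
          have Ftn: "F t \<le> b * F (real n)" using B1[OF nT n1] .
          then have Fnp: "F (real n) > 0" using Ftp b pos_from_bound by blast
          have "ln (F t) \<le> ln (b * F (real n))" using Ftn Ftp by simp
          also have "\<dots> = ln b + ln (F (real n))" using b Fnp by (simp add: ln_mult)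
          also have "\<dots> < ln b + r' * h (real n)" using N[OF nN] Fnp by auto
          also have "\<dots> < r * h (real n + 1)" using N[OF nN] by auto
          also have "\<dots> \<le> r * h t" using m2 rr by (simp add: mult_left_mono_neg)
          finally show ?thesis using ht by (simp add: pos_divide_less_eq)
        qed simp
        then show "G t < y" using ht r by (auto simp: G_def elog_div_eq)
      qed
    qed
  qed
  have LI2: "liminf a \<le> Liminf at_top G"
    unfolding le_Liminf_iff
  proof (intro allI impI)
    fix y assume yL: "y < liminf a"
    have L0: "liminf a \<le> 0"
      by (rule Liminf_le) (use transfer_seq[OF G0] in \<open>auto simp: a_def\<close>)
    show "eventually (\<lambda>t. y < G t) at_top"
    proof (cases "y = -\<infinity>")
      case True
      have ev1: "eventually (\<lambda>n. a n > -\<infinity>) sequentially"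
        using less_LiminfD[OF yL] True by simp
      have "eventually (\<lambda>n::nat. h (real n) > 0 \<and> F (real n) > 0) sequentially"
        using hposseq ev1 eventually_ge_at_top[of "nat \<lceil>T\<rceil>"]
      proof eventually_elim
        case (elim n)
        have "real n \<ge> T" using elim(3) by linarith
        then have "F (real n) \<ge> 0" using Fnn by auto
        then show ?case using elim unfolding a_def G_def by (auto simp: elog_div_eq split: if_splits)
      qed
      then obtain N where N: "\<And>n. n \<ge> N \<Longrightarrow> h (real n) > 0 \<and> F (real n) > 0"
        unfolding eventually_sequentially by blast
      show ?thesis
      proof (rule backT[of N])
        fix n assume "n \<ge> N" then show "h (real n) > 0" using N by blast
      next
        fix t n assume tT: "t \<ge> T" and nN: "n \<ge> N" and nT: "real n \<ge> T" and n1: "real n \<le> t" "t \<le> real n + 1"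
          and ht: "h t > 0" and m1: "h (real n) \<le> h t" and m2: "h t \<le> h (real n + 1)"
        have "F (real (Suc n)) > 0" using N[of "Suc n"] nN by auto
        then have "F (real n + 1) > 0" by (simp add: add.commute)
        moreover have "F (real n + 1) \<le> b * F t" using B2[OF nT n1] .
        ultimately have "F t > 0" using b using pos_from_bound by blast
        then show "y < G t" using ht True by (auto simp: G_def elog_div_eq)
      qed
    next
      case False
      obtain z where z: "y < z" "z < liminf a" using dense yL by blast
      obtain r where r: "y = ereal r" using yL L0 False by (cases y) auto
      obtain r' where r': "z = ereal r'" using z L0 by (cases z) auto
      from z(2) L0 have "z < 0" by (rule less_le_trans)
      then have "r' < 0" using r' by simp
      then have rr: "r < r'" "r \<le> 0" using z r r' by auto
      have ev1: "eventually (\<lambda>n. a n > ereal r') sequentially"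
        using less_LiminfD[OF z(2)] r' by simp
      have "(\<lambda>n::nat. r' * (h (real n + 1) / h (real n)) - ln b / h (real n) - r) \<longlonglongrightarrow> r' * 1 - 0 - r"
        by (intro tendsto_intros hratseq inv0)
      then have ev2: "eventually (\<lambda>n::nat. r' * (h (real n + 1) / h (real n)) - ln b / h (real n) - r > 0) sequentially"
        using rr by (intro order_tendstoD(1)) auto
      have "eventually (\<lambda>n::nat. h (real n) > 0 \<and> F (real n) \<noteq> 0 \<and> ln (F (real n)) > r' * h (real n)) sequentially"
        using hposseq ev1
      proof eventually_elim
        case (elim n)
        have A: "F (real n) \<noteq> 0 \<and> ln (F (real n)) / h (real n) > r'"
          using elim(2) elim(1) unfolding a_def G_def by (auto simp: elog_div_eq split: if_splits)
        then show ?case using elim(1) by (auto simp: pos_less_divide_eq elog_def)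
      qed
      then have "eventually (\<lambda>n::nat. h (real n) > 0 \<and> (F (real n) \<noteq> 0 \<and> ln (F (real n)) > r' * h (real n))
             \<and> r * h (real n) < r' * h (real n + 1) - ln b) sequentially"
        using ev2 
      proof eventually_elim
        case (elim n)
        have "0 < (r' * (h (real n + 1) / h (real n)) - ln b / h (real n) - r) * h (real n)"
          using elim by simp
        also have "\<dots> = r' * h (real n + 1) - ln b - r * h (real n)"
          using elim(1) by (simp add: field_simps)
        finally show ?case using elim by auto
      qed
      then obtain N where N: "\<And>n. n \<ge> N \<Longrightarrow> h (real n) > 0 \<and> (F (real n) \<noteq> 0 \<and> ln (F (real n)) > r' * h (real n))
             \<and> r * h (real n) < r' * h (real n + 1) - ln b"
        unfolding eventually_sequentially by blast
      show ?thesis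
      proof (rule backT[of N])
        fix n assume "n \<ge> N" then show "h (real n) > 0" using N by blast
      next
        fix t n assume tT: "t \<ge> T" and nN: "n \<ge> N" and nT: "real n \<ge> T" and n1: "real n \<le> t" "t \<le> real n + 1"
          and ht: "h t > 0" and m1: "h (real n) \<le> h t" and m2: "h t \<le> h (real n + 1)"
        have S: "F (real n + 1) \<noteq> 0 \<and> ln (F (real n + 1)) > r' * h (real n + 1)"
          using N[of "Suc n"] nN by (auto simp: add.commute)
        have "real n + 1 \<ge> T" using nT by simp
        then have "F (real n + 1) \<ge> 0" using Fnn by auto
        then have Fn1: "F (real n + 1) > 0" using S by simp
        have Bt: "F (real n + 1) \<le> b * F t" using B2[OF nT n1] .
        then have Ftp: "F t > 0" using Fn1 b using pos_from_bound by blast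
        have "r * h t \<le> r * h (real n)" using m1 rr by (simp add: mult_left_mono_neg)
        also have "\<dots> < r' * h (real n + 1) - ln b" using N[OF nN] by auto
        also have "\<dots> < ln (F (real n + 1)) - ln b" using S by auto
        also have "ln (F (real n + 1)) \<le> ln (b * F t)" using Bt Fn1 by simp
        then have "ln (F (real n + 1)) - ln b \<le> ln (F t)" using b Ftp by (simp add: ln_mult)
        finally have "r < ln (F t) / h t" using ht by (simp add: pos_less_divide_eq)
        then show "y < G t" using ht r Ftp by (auto simp: G_def elog_div_eq)
      qed
    qed
  qed
  show ?thesis using LS1 LS2 LI1 LI2 unfolding a_def G_def by auto
qed

theorem lemma3p2:
  fixes M :: "'a measure" and Y :: "'a \<Rightarrow> real"
    and p h :: "real \<Rightarrow> real" and b t1 t2 :: real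
  assumes "prob_space M"
    and "Y \<in> borel_measurable M"
    and "\<forall>x\<in>space M. Y x \<ge> 0"
    and "b > 1" and "t1 > 0" and "t2 > 0"
    and "mono_on {t1..} p"
    and "\<forall>t\<ge>t1. p t \<ge> 0"
    and "\<forall>t\<ge>t1. 0 < p (2 * t) \<and> p (2 * t) \<le> b * p t"
    and "((\<lambda>t. p t * measure M {x\<in>space M. Y x > t}) \<longlongrightarrow> 0) at_top"
    and "mono_on {t2..} h"
    and "\<forall>t\<ge>t2. h t \<ge> 0"
    and "filterlim h at_top at_top"
    and "((\<lambda>t. h (t + 1) / h t) \<longlongrightarrow> 1) at_top"
  shows "limsup (\<lambda>n::nat. elog (p (real n) * measure M {x\<in>space M. Y x > real n}) / ereal (h (real n)))
         = Limsup at_top (\<lambda>t::real. elog (p t * measure M {x\<in>space M. Y x > t}) / ereal (h t))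
     \<and> liminf (\<lambda>n::nat. elog (p (real n) * measure M {x\<in>space M. Y x > real n}) / ereal (h (real n)))
         = Liminf at_top (\<lambda>t::real. elog (p t * measure M {x\<in>space M. Y x > t}) / ereal (h t))"
proof -
  interpret prob_space M by fact
  define P where "P t = measure M {x\<in>space M. Y x > t}" for t
  define F where "F t = p t * P t" for t
  define T where "T = max 1 (max t1 t2)"
  have T: "T \<ge> 0" "T \<ge> 1" "T \<ge> t1" "T \<ge> t2" unfolding T_def by auto
  have Pnn: "P t \<ge> 0" for t unfolding P_def by simp
  have Pmono: "P s \<le> P t" if "t \<le> s" for s t
    unfolding P_def
  proof (rule finite_measure_mono)
    show "{x \<in> space M. s < Y x} \<subseteq> {x \<in> space M. t < Y x}" using that by auto
    show "{x \<in> space M. t < Y x} \<in> sets M" using assms(2) by measurable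
  qed
  have pm: "p u \<le> p v" if "t1 \<le> u" "u \<le> v" for u v
    using assms(7) that by (auto intro: mono_onD)
  have Fnn: "\<forall>t\<ge>T. F t \<ge> 0" using T assms(8) Pnn unfolding F_def by auto
  have B1: "F t \<le> b * F n" if "T \<le> n" "n \<le> t" "t \<le> n + 1" for n t
  proof -
    have "p t \<le> p (2 * n)" using pm[of t "2*n"] that T by auto
    also have "\<dots> \<le> b * p n" using assms(9) that T by auto
    finally have a: "p t \<le> b * p n" .
    have "P t \<le> P n" using Pmono that by auto
    then have "p t * P t \<le> (b * p n) * P n"
      using a Pnn assms(4) assms(8) that T by (intro mult_mono) auto
    then show ?thesis unfolding F_def by simp
  qed
  have B2: "F (n + 1) \<le> b * F t" if "T \<le> n" "n \<le> t" "t \<le> n + 1" for n t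
  proof -
    have "p (n + 1) \<le> p (2 * t)" using pm[of "n+1" "2*t"] that T by auto
    also have "\<dots> \<le> b * p t" using assms(9) that T by auto
    finally have a: "p (n + 1) \<le> b * p t" .
    have "P (n + 1) \<le> P t" using Pmono that by auto
    then have "p (n + 1) * P (n + 1) \<le> (b * p t) * P t"
      using a Pnn assms(4) assms(8) that T by (intro mult_mono) auto
    then show ?thesis unfolding F_def by simp
  qed
  have Flim: "(F \<longlongrightarrow> 0) at_top" using assms(10) unfolding F_def P_def by simp
  have hmono: "mono_on {T..} h" by (rule mono_on_subset[OF assms(11)]) (use T in auto)
  from main[OF assms(4) T(1) Fnn B1 B2 Flim hmono assms(13) assms(14)]
  show ?thesis unfolding F_def P_def by simp
qed

end
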